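(* For every smooth closed plane curve parametrized by arc length with rotation number $n\ge1$, $4\pi^2\widetilde I_{-1}\le I_0$.
   Context: A closed plane curve is a smooth map $\vec f:\mathbb{R}/L\mathbb{Z}\to\mathbb{R}^2$ parametrized by arc length $s$, where $L>0$ is its length. $\vec\nu$ is $\partial_s\vec f$ rotated counterclockwise by $\pi/2$, $\kappa=\partial_s^2\vec f\cdot\vec\nu$, $n=\frac1{2\pi}\int_0^L\kappa\,ds$, $\tilde\kappa=\kappa-\frac1L\int_0^L\kappa\,ds$, $I_0=L\int_0^L\tilde\kappa^2\,ds$. Identifying $\mathbb{R}^2$ with $\mathbb{C}$, $f=f_1+if_2$, $\hat f(k)=L^{-1/2}\int_0^L f(s)e^{-2\pi i k s/L}\,ds$, and $\widetilde I_{-1}=\frac{4\pi^2}{L^3}\sum_{k\in\mathbb Z\setminus\{0\}}(k-n)^2|\hat f(k)|^2$. *)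

theory Defs
  imports "HOL-Analysis.Analysis"
begin

text \<open>Plane curves are maps real => complex (R^2 identified with C).
  The curve is given by an L-periodic function; arc length s ranges over [0,L].\<close>

definition vderiv :: "(real \<Rightarrow> complex) \<Rightarrow> real \<Rightarrow> complex" where
  "vderiv g = (\<lambda>x. vector_derivative g (at x))"

definition smooth_fun :: "(real \<Rightarrow> complex) \<Rightarrow> bool" where
  "smooth_fun g \<longleftrightarrow> (\<forall>k x. ((vderiv ^^ k) g) differentiable (at x))"

definition closed_arclength_curve :: "(real \<Rightarrow> complex) \<Rightarrow> real \<Rightarrow> bool" where
  "closed_arclength_curve f L \<longleftrightarrow> L > 0 \<and> smooth_fun f \<and>
     (\<forall>s. f (s + L) = f s) \<and> (\<forall>s. norm (vderiv f s) = 1)"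

definition normal :: "(real \<Rightarrow> complex) \<Rightarrow> real \<Rightarrow> complex" where
  "normal f s = \<i> * vderiv f s"

definition curvature :: "(real \<Rightarrow> complex) \<Rightarrow> real \<Rightarrow> real" where
  "curvature f s = vderiv (vderiv f) s \<bullet> normal f s"

definition rotation_number :: "(real \<Rightarrow> complex) \<Rightarrow> real \<Rightarrow> real" where
  "rotation_number f L = (1 / (2 * pi)) * integral {0..L} (curvature f)"

definition curvature_tilde :: "(real \<Rightarrow> complex) \<Rightarrow> real \<Rightarrow> real \<Rightarrow> real" where
  "curvature_tilde f L s = curvature f s - (1 / L) * integral {0..L} (curvature f)"

definition I0 :: "(real \<Rightarrow> complex) \<Rightarrow> real \<Rightarrow> real" where
  "I0 f L = L * integral {0..L} (\<lambda>s. (curvature_tilde f L s)\<^sup>2)"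

definition fourier_coeff :: "(real \<Rightarrow> complex) \<Rightarrow> real \<Rightarrow> int \<Rightarrow> complex" where
  "fourier_coeff f L k = of_real (L powr (-1/2)) *
     integral {0..L} (\<lambda>s. f s * exp (- 2 * of_real pi * \<i> * of_int k * of_real s / of_real L))"

definition I_tilde_minus1 :: "(real \<Rightarrow> complex) \<Rightarrow> real \<Rightarrow> real" where
  "I_tilde_minus1 f L = 4 * pi\<^sup>2 / L ^ 3 *
     (\<Sum>\<^sub>\<infinity>k\<in>UNIV - {0::int}. (of_int k - rotation_number f L)\<^sup>2 * (cmod (fourier_coeff f L k))\<^sup>2)"

end

theory Submission
  imports Defs
begin


definition cE :: "real \<Rightarrow> int \<Rightarrow> complex" where
  "cE L k = 2 * of_real pi * \<i> * of_int k / of_real L"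

definition E :: "real \<Rightarrow> int \<Rightarrow> real \<Rightarrow> complex" where
  "E L k s = exp (of_real s * cE L k)"

lemma E_deriv: "((E L k) has_vector_derivative (cE L k * E L k s)) (at s within S)"
proof -
  have "((\<lambda>z. exp (z * cE L k)) has_field_derivative (exp (of_real s * cE L k) * cE L k)) (at (of_real s))"
    by (auto intro!: derivative_eq_intros)
  from has_vector_derivative_real_field[OF this] show ?thesis
    unfolding E_def by (simp add: mult.commute)
qed

lemma E_0 [simp]: "E L k 0 = 1" by (simp add: E_def)

lemma E_L: assumes "L \<noteq> 0" shows "E L k L = 1"
proof -
  have "of_real L * cE L k = (2 * of_int k * of_real pi) * \<i>"
    using assms by (simp add: cE_def field_simps)
  then show ?thesis unfolding E_def using exp_integer_2pi[of "of_int k"] by simp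
qed

lemma E_mult: "E L j s * E L k s = E L (j + k) s"
proof -
  have "of_real s * cE L j + of_real s * cE L k = of_real s * cE L (j+k)"
    by (simp add: cE_def ring_distribs add_divide_distrib)
  then show ?thesis unfolding E_def exp_add[symmetric] by simp
qed

lemma E_zero [simp]: "E L 0 s = 1" by (simp add: E_def cE_def)

lemma cE_nz: "L \<noteq> 0 \<Longrightarrow> k \<noteq> 0 \<Longrightarrow> cE L k \<noteq> 0"
  by (simp add: cE_def)

lemma E_integral:
  assumes "L > 0"
  shows "((E L m) has_integral (if m = 0 then of_real L else 0)) {0..L}"
proof (cases "m = 0")
  case True
  have "E L 0 = (\<lambda>_. 1)" by (rule ext) simp
  then show ?thesis using has_integral_const_real[of "1::complex" 0 L] assms True
    by (simp add: scaleR_conv_of_real)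
next
  case False
  have c: "cE L m \<noteq> 0" using cE_nz False assms by simp
  have "((E L m) has_integral ((\<lambda>s. inverse (cE L m) * E L m s) L - (\<lambda>s. inverse (cE L m) * E L m s) 0)) {0..L}"
  proof (rule fundamental_theorem_of_calculus)
    show "0 \<le> L" using assms by simp
    fix x assume "x \<in> {0..L}"
    have "((\<lambda>s. inverse (cE L m) * E L m s) has_vector_derivative (inverse (cE L m) * (cE L m * E L m x))) (at x within {0..L})"
      by (rule has_vector_derivative_mult_right[OF E_deriv])
    moreover have "inverse (cE L m) * (cE L m * E L m x) = E L m x" using c by (simp add: field_simps)
    ultimately show "((\<lambda>s. inverse (cE L m) * E L m s) has_vector_derivative E L m x) (at x within {0..L})"
      by metis
  qed
  then show ?thesis using False E_L[of L m] assms by simp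
qed

lemma E_cnj: "cnj (E L k s) = E L (-k) s"
  by (simp add: E_def cE_def exp_cnj)

lemma cE_alt: "cE L k = \<i> * of_real (2 * pi * of_int k / L)"
  by (simp add: cE_def)

lemma E_cis: "E L k s = cis (s * (2 * pi * of_int k / L))"
  unfolding E_def cE_alt cis_conv_exp by (simp add: mult.commute mult.left_commute)

lemma E_norm [simp]: "cmod (E L k s) = 1"
  by (simp only: E_cis norm_cis)

lemma E_cont [continuous_intros]: "continuous_on S (\<lambda>s. E L k s)"
  by (rule continuous_on_vector_derivative, rule E_deriv)

lemma cint: "continuous_on {a..b} f \<Longrightarrow> f integrable_on {a..b}"
  for f :: "real \<Rightarrow> 'a::banach"
  by (rule integrable_continuous_interval)

lemma integral_Re_HK: "f integrable_on A \<Longrightarrow> integral A (\<lambda>x. Re (f x)) = Re (integral A f)"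
  by (rule integral_unique, rule has_integral_Re, rule integrable_integral)

lemma E_orth:
  assumes "L > 0"
  shows "integral {0..L} (\<lambda>s. E L j s * E L (-k) s) = (if j = k then of_real L else 0)"
proof -
  have "integral {0..L} (\<lambda>s. E L j s * E L (-k) s) = integral {0..L} (E L (j - k))"
    by (simp add: E_mult)
  also have "\<dots> = (if j - k = 0 then of_real L else 0)"
    using E_integral[OF assms, of "j-k"] by (rule integral_unique)
  finally show ?thesis by simp
qed

lemma bessel:
  assumes L: "L > 0" and hc: "continuous_on {0..L} h" and K: "finite K"
  shows "(\<Sum>k\<in>K. (cmod (integral {0..L} (\<lambda>s. h s * E L (-k) s)))\<^sup>2)
           \<le> L * integral {0..L} (\<lambda>s. (cmod (h s))\<^sup>2)"
proof -
  define c where "c k = integral {0..L} (\<lambda>s. h s * E L (-k) s)" for k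
  define T where "T s = (\<Sum>k\<in>K. c k * E L k s)" for s
  define S where "S = (\<Sum>k\<in>K. (cmod (c k))\<^sup>2)"
  have Tc: "continuous_on {0..L} T" unfolding T_def by (intro continuous_intros)
  have cT: "cnj (T s) = (\<Sum>k\<in>K. cnj (c k) * E L (-k) s)" for s
    by (simp add: T_def E_cnj)
  have A: "integral {0..L} (\<lambda>s. h s * cnj (T s)) = of_real S"
  proof -
    have "integral {0..L} (\<lambda>s. h s * cnj (T s))
        = integral {0..L} (\<lambda>s. \<Sum>k\<in>K. cnj (c k) * (h s * E L (-k) s))"
      by (simp add: cT sum_distrib_left mult.commute mult.left_commute)
    also have "\<dots> = (\<Sum>k\<in>K. integral {0..L} (\<lambda>s. cnj (c k) * (h s * E L (-k) s)))"
      by (rule integral_sum[OF K]) (intro cint continuous_intros hc)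
    also have "\<dots> = (\<Sum>k\<in>K. cnj (c k) * c k)" by (simp add: c_def)
    also have "\<dots> = of_real S" unfolding S_def of_real_sum
      by (intro sum.cong refl) (simp add: complex_eq_iff power2_eq_square algebra_simps cmod_power2[unfolded power2_eq_square])
    finally show ?thesis .
  qed
  have B: "integral {0..L} (\<lambda>s. T s * cnj (T s)) = of_real (L * S)"
  proof -
    have "integral {0..L} (\<lambda>s. T s * cnj (T s))
        = integral {0..L} (\<lambda>s. \<Sum>j\<in>K. \<Sum>k\<in>K. (c j * cnj (c k)) * (E L j s * E L (-k) s))"
      by (simp add: T_def sum_product E_cnj mult.commute mult.left_commute)
    also have "\<dots> = (\<Sum>j\<in>K. \<Sum>k\<in>K. integral {0..L} (\<lambda>s. (c j * cnj (c k)) * (E L j s * E L (-k) s)))"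
      by (simp add: integral_sum[OF K] cint continuous_intros K integrable_sum)
    also have "\<dots> = (\<Sum>j\<in>K. \<Sum>k\<in>K. (c j * cnj (c k)) * (if j = k then of_real L else 0))"
      by (simp add: E_orth[OF L] del: mult_1_left)
    also have "\<dots> = (\<Sum>j\<in>K. c j * cnj (c j) * of_real L)"
      by (simp add: K if_distrib sum.delta cong: if_cong)
    also have "\<dots> = of_real (L * S)" unfolding S_def sum_distrib_left of_real_sum
      by (intro sum.cong refl) (simp add: complex_eq_iff power2_eq_square algebra_simps cmod_power2[unfolded power2_eq_square])
    finally show ?thesis .
  qed
  define p where "p s = Re (h s * cnj (T s))" for s
  define q where "q s = Re (T s * cnj (T s))" for s
  define a where "a s = (cmod (h s))\<^sup>2" for s
  have pt: "(cmod (h s - T s / of_real L))\<^sup>2 = a s - (2 / L) * p s + (1 / L^2) * q s" for s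
  proof -
    have "(cmod (h s - T s / of_real L))\<^sup>2 = Re ((h s - T s / of_real L) * cnj (h s - T s / of_real L))"
      by (subst complex_mult_cnj) (simp add: cmod_power2)
    also have "\<dots> = Re (h s * cnj (h s)) - (2 / L) * Re (h s * cnj (T s)) + (1 / L^2) * Re (T s * cnj (T s))"
      using L by (simp add: algebra_simps power2_eq_square field_simps)
    finally show ?thesis unfolding a_def p_def q_def by (subst (asm) complex_mult_cnj) (simp add: cmod_power2)
  qed
  have i1: "a integrable_on {0..L}" unfolding a_def[abs_def] by (intro cint continuous_intros hc)
  have i2: "p integrable_on {0..L}" unfolding p_def[abs_def] by (intro cint continuous_intros hc Tc)
  have i3: "q integrable_on {0..L}" unfolding q_def[abs_def] by (intro cint continuous_intros hc Tc)
  have "0 \<le> integral {0..L} (\<lambda>s. (cmod (h s - T s / of_real L))\<^sup>2)"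
    by (rule integral_nonneg) (use L in \<open>auto intro!: cint continuous_intros hc Tc\<close>)
  also have "\<dots> = integral {0..L} (\<lambda>s. a s - (2 / L) * p s + (1 / L^2) * q s)"
    unfolding pt ..
  also have "\<dots> = integral {0..L} a - (2 / L) * integral {0..L} p + (1 / L^2) * integral {0..L} q"
  proof -
    have i2': "(\<lambda>s. (2 / L) * p s) integrable_on {0..L}"
      using integrable_on_cmult_left[OF i2, of "2/L"] by simp
    have i3': "(\<lambda>s. (1 / L^2) * q s) integrable_on {0..L}"
      using integrable_on_cmult_left[OF i3, of "1/L^2"] by simp
    show ?thesis
      apply (subst integral_add[OF integrable_diff[OF i1 i2'] i3'])
      apply (subst integral_diff[OF i1 i2'])
      apply (simp only: integral_mult_right)
      done
  qed
  also have "\<dots> = integral {0..L} a - S / L"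
  proof -
    have "integral {0..L} p = Re (integral {0..L} (\<lambda>s. h s * cnj (T s)))"
      unfolding p_def by (rule integral_Re_HK) (intro cint continuous_intros hc Tc)
    then have ip: "integral {0..L} p = S" using A by simp
    have "integral {0..L} q = Re (integral {0..L} (\<lambda>s. T s * cnj (T s)))"
      unfolding q_def by (rule integral_Re_HK) (intro cint continuous_intros hc Tc)
    then have iq: "integral {0..L} q = L * S" using B by simp
    show ?thesis unfolding ip iq using L by (simp add: field_simps power2_eq_square)
  qed
  finally have "S \<le> L * integral {0..L} a" using L
    by (simp add: field_simps)
  then show ?thesis unfolding S_def c_def a_def .
qed


lemma ibp:
  assumes L: "L > 0"
    and d: "\<And>x. (u has_vector_derivative u' x) (at x)"
    and c: "continuous_on UNIV u'"
    and p: "u L = u 0"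
  shows "integral {0..L} (\<lambda>s. u' s * E L (-k) s) = cE L k * integral {0..L} (\<lambda>s. u s * E L (-k) s)"
proof -
  have uc: "continuous_on UNIV u"
    by (rule continuous_on_vector_derivative, rule has_vector_derivative_at_within, rule d)
  have "((\<lambda>s. u' s * E L (-k) s + u s * (cE L (-k) * E L (-k) s)) has_integral
          ((\<lambda>s. u s * E L (-k) s) L - (\<lambda>s. u s * E L (-k) s) 0)) {0..L}"
  proof (rule fundamental_theorem_of_calculus)
    show "0 \<le> L" using L by simp
    fix x assume "x \<in> {0..L}"
    have "((\<lambda>s. u s * E L (-k) s) has_vector_derivative
           (u x * (cE L (-k) * E L (-k) x) + u' x * E L (-k) x)) (at x within {0..L})"
      by (rule has_vector_derivative_mult[OF has_vector_derivative_at_within[OF d] E_deriv])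
    then show "((\<lambda>s. u s * E L (-k) s) has_vector_derivative
           (u' x * E L (-k) x + u x * (cE L (-k) * E L (-k) x))) (at x within {0..L})"
      by (simp add: add.commute)
  qed
  then have "integral {0..L} (\<lambda>s. u' s * E L (-k) s + u s * (cE L (-k) * E L (-k) s)) = 0"
    using p E_L[of L "-k"] L by (simp add: integral_unique)
  moreover have "(\<lambda>s. u' s * E L (-k) s + u s * (cE L (-k) * E L (-k) s))
     = (\<lambda>s. u' s * E L (-k) s + cE L (-k) * (u s * E L (-k) s))"
    by (auto simp: fun_eq_iff algebra_simps)
  moreover have "integral {0..L} (\<lambda>s. u' s * E L (-k) s + cE L (-k) * (u s * E L (-k) s))
     = integral {0..L} (\<lambda>s. u' s * E L (-k) s) + cE L (-k) * integral {0..L} (\<lambda>s. u s * E L (-k) s)"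
    by (subst integral_add) (auto intro!: cint continuous_intros continuous_on_subset[OF c] continuous_on_subset[OF uc])
  moreover have "cE L (-k) = - cE L k" by (simp add: cE_def)
  ultimately show ?thesis by (simp add: algebra_simps add_eq_0_iff)
qed

lemma curv_formula:
  assumes d1: "\<And>x. (f1 has_vector_derivative f2 x) (at x)"
    and n1: "\<And>x. cmod (f1 x) = 1"
  shows "f2 s = \<i> * of_real (f2 s \<bullet> (\<i> * f1 s)) * f1 s"
proof -
  have one: "f1 x * cnj (f1 x) = 1" for x
    using n1[of x] by (simp add: complex_mult_cnj cmod_power2[symmetric])
  have "((\<lambda>x. f1 x * cnj (f1 x)) has_vector_derivative (f1 s * cnj (f2 s) + f2 s * cnj (f1 s))) (at s)"
    by (intro has_vector_derivative_mult has_vector_derivative_cnj d1)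
  moreover have "(\<lambda>x. f1 x * cnj (f1 x)) = (\<lambda>x. 1)" using one by auto
  ultimately have dz: "((\<lambda>x. 1::complex) has_vector_derivative (f1 s * cnj (f2 s) + f2 s * cnj (f1 s))) (at s)"
    by simp
  have z: "f1 s * cnj (f2 s) + f2 s * cnj (f1 s) = 0"
    using vector_derivative_unique_at[OF dz has_vector_derivative_const] by simp
  define a where "a = f2 s * cnj (f1 s)"
  have ra: "Re a = 0" using z unfolding a_def by (simp add: complex_eq_iff algebra_simps)
  have f2a: "f2 s = a * f1 s" unfolding a_def using one[of s] by (simp add: mult.assoc mult.commute)
  have e: "Re (f1 s) * Re (f1 s) + Im (f1 s) * Im (f1 s) = 1"
    using n1[of s] cmod_power2[of "f1 s"] by (simp add: power2_eq_square)
  have "f2 s \<bullet> (\<i> * f1 s) = Im a * (Re (f1 s) * Re (f1 s) + Im (f1 s) * Im (f1 s))"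
    unfolding f2a inner_complex_def by (simp add: algebra_simps)
  then have ka: "f2 s \<bullet> (\<i> * f1 s) = Im a" using e by simp
  show ?thesis unfolding ka using ra by (subst f2a) (simp add: complex_eq_iff)
qed

lemma Defs_exp: "exp (- 2 * of_real pi * \<i> * of_int k * of_real s / of_real L) = E L (-k) s"
proof -
  have "- 2 * of_real pi * \<i> * of_int k * of_real s / of_real L = of_real s * cE L (-k)"
    unfolding cE_def by (simp add: times_divide_eq_right mult_ac)
  then show ?thesis unfolding E_def by simp
qed


theorem mainTheorem7:
  fixes f :: "real \<Rightarrow> complex" and L :: real
  assumes "closed_arclength_curve f L"
    and "rotation_number f L \<ge> 1"
  shows "4 * pi\<^sup>2 * I_tilde_minus1 f L \<le> I0 f L"
proof -
  define f1 where "f1 = vderiv f"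
  define f2 where "f2 = vderiv f1"
  have L: "L > 0" and sm: "smooth_fun f" and per: "\<And>s. f (s + L) = f s"
    and n1: "\<And>s. cmod (f1 s) = 1"
    using assms(1) unfolding closed_arclength_curve_def f1_def by auto
  have dk: "((vderiv ^^ k) f) differentiable (at x)" for k x using sm unfolding smooth_fun_def by blast
  have d0: "(f has_vector_derivative f1 x) (at x)" for x
    using dk[of 0 x] unfolding f1_def vderiv_def by (simp add: vector_derivative_works)
  have d1: "(f1 has_vector_derivative f2 x) (at x)" for x
    using dk[of 1 x] unfolding f2_def f1_def vderiv_def by (simp add: vector_derivative_works)
  have d2: "f2 differentiable (at x)" for x
    using dk[of 2 x] unfolding f2_def f1_def by (simp add: numeral_2_eq_2)
  have c2: "continuous_on UNIV f2"
    using d2 by (simp add: differentiable_imp_continuous_within continuous_on_eq_continuous_within)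
  have c1: "continuous_on UNIV f1"
    by (rule continuous_on_vector_derivative, rule has_vector_derivative_at_within, rule d1)
  have c0: "continuous_on UNIV f"
    by (rule continuous_on_vector_derivative, rule has_vector_derivative_at_within, rule d0)
  have pf: "f L = f 0" using per[of 0] by simp
  have pf1: "f1 L = f1 0"
  proof -
    have "((f \<circ> (\<lambda>x. x + L)) has_vector_derivative (1 *\<^sub>R f1 (0 + L))) (at 0)"
      by (rule vector_diff_chain_at) (auto intro!: derivative_eq_intros d0)
    moreover have "f \<circ> (\<lambda>x. x + L) = f" using per by (auto simp: o_def)
    ultimately have "(f has_vector_derivative f1 L) (at 0)" by simp
    then show ?thesis by (rule vector_derivative_unique_at[OF _ d0[of 0]])
  qed
  define kap where "kap = curvature f"
  have kap_eq: "kap s = f2 s \<bullet> (\<i> * f1 s)" for s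
    unfolding kap_def curvature_def normal_def f2_def f1_def ..
  have ck: "continuous_on UNIV kap"
    unfolding kap_eq[abs_def] by (intro continuous_intros c1 c2)
  define n where "n = rotation_number f L"
  define mu where "mu = (1 / L) * integral {0..L} kap"
  have mu_n: "mu = 2 * pi * n / L"
    unfolding mu_def n_def rotation_number_def kap_def by simp
  define h where "h s = f2 s - \<i> * of_real mu * f1 s" for s
  have hc: "continuous_on {0..L} h" unfolding h_def
    by (intro continuous_intros continuous_on_subset[OF c1] continuous_on_subset[OF c2]) auto
  have hnorm: "(cmod (h s))\<^sup>2 = (curvature_tilde f L s)\<^sup>2" for s
  proof -
    have "h s = \<i> * of_real (kap s - mu) * f1 s"
      unfolding h_def using curv_formula[OF d1 n1, of s] kap_eq[of s]
      by (simp add: algebra_simps)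
    then have "cmod (h s) = \<bar>kap s - mu\<bar>" by (simp add: norm_mult n1 flip: of_real_diff)
    then show ?thesis unfolding curvature_tilde_def mu_def kap_def by simp
  qed
  define F where "F k = integral {0..L} (\<lambda>s. f s * E L (-k) s)" for k
  define F1 where "F1 k = integral {0..L} (\<lambda>s. f1 s * E L (-k) s)" for k
  define F2 where "F2 k = integral {0..L} (\<lambda>s. f2 s * E L (-k) s)" for k
  have F1F: "F1 k = cE L k * F k" for k
    unfolding F1_def F_def by (rule ibp[OF L d0 c1 pf])
  have F2F: "F2 k = cE L k * F1 k" for k
    unfolding F2_def F1_def by (rule ibp[OF L d1 c2 pf1])
  define ch where "ch k = integral {0..L} (\<lambda>s. h s * E L (-k) s)" for k
  have chF: "ch k = F2 k - \<i> * of_real mu * F1 k" for k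
  proof -
    have "ch k = integral {0..L} (\<lambda>s. f2 s * E L (-k) s - (\<i> * of_real mu) * (f1 s * E L (-k) s))"
      unfolding ch_def h_def by (simp add: algebra_simps)
    also have "\<dots> = F2 k - \<i> * of_real mu * F1 k"
      unfolding F2_def F1_def
      by (subst integral_diff) (auto intro!: cint continuous_intros continuous_on_subset[OF c1] continuous_on_subset[OF c2])
    finally show ?thesis .
  qed
  have chabs: "cmod (ch k) = (4 * pi\<^sup>2 / L\<^sup>2) * \<bar>real_of_int k\<bar> * \<bar>real_of_int k - n\<bar> * cmod (F k)" for k
  proof -
    define R where "R = (4 * pi\<^sup>2 / L\<^sup>2) * (real_of_int k * (real_of_int k - n))"
    have e1: "ch k = (cE L k * (cE L k - \<i> * of_real mu)) * F k"
      using chF F1F F2F by (simp add: algebra_simps)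
    have e2: "cE L k * (cE L k - \<i> * of_real mu) = - of_real R"
      using L unfolding cE_def mu_n R_def by (simp add: field_simps power2_eq_square)
    have "cmod (ch k) = \<bar>R\<bar> * cmod (F k)" unfolding e1 e2 by (simp add: norm_mult)
    then show ?thesis using L unfolding R_def by (simp add: abs_mult)
  qed
  have fc: "(cmod (fourier_coeff f L k))\<^sup>2 = (cmod (F k))\<^sup>2 / L" for k
  proof -
    have "fourier_coeff f L k = of_real (L powr (-1/2)) * F k"
      unfolding fourier_coeff_def F_def Defs_exp ..
    moreover have "(L powr (-1/2))\<^sup>2 = 1 / L"
    proof -
      have "(L powr (-1/2))\<^sup>2 = L powr (-1/2 + -1/2)" by (simp only: power2_eq_square powr_add)
      also have "\<dots> = L powr -1" by simp
      also have "\<dots> = 1 / L" using L by (rule powr_neg_one)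
      finally show ?thesis .
    qed
    ultimately show ?thesis by (simp add: norm_mult power_mult_distrib)
  qed
  define B where "B = L^4 / (16 * pi^4) * integral {0..L} (\<lambda>s. (curvature_tilde f L s)\<^sup>2)"
  define t where "t k = (real_of_int k - rotation_number f L)\<^sup>2 * (cmod (fourier_coeff f L k))\<^sup>2" for k
  have fin: "sum t K \<le> B" if K: "finite K" "K \<subseteq> UNIV - {0}" for K
  proof -
    have "t k \<le> L^3 / (16 * pi^4) * (cmod (ch k))\<^sup>2" if "k \<in> K" for k
    proof -
      have k0: "k \<noteq> 0" using that K by auto
      then have k1: "1 \<le> (real_of_int k)\<^sup>2"
        by (metis of_int_1_le_iff of_int_power one_le_power zero_less_power2 int_one_le_iff_zero_less less_irrefl)
      have "t k = (real_of_int k - n)\<^sup>2 * (cmod (F k))\<^sup>2 / L" unfolding t_def fc n_def by simp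
      also have "\<dots> \<le> (real_of_int k)\<^sup>2 * ((real_of_int k - n)\<^sup>2 * (cmod (F k))\<^sup>2 / L)"
        using mult_right_mono[OF k1, of "(real_of_int k - n)\<^sup>2 * (cmod (F k))\<^sup>2 / L"] L by simp
      also have "\<dots> = L^3 / (16 * pi^4) * (cmod (ch k))\<^sup>2"
      proof -
        define Y where "Y = (real_of_int k)\<^sup>2 * ((real_of_int k - n)\<^sup>2 * (cmod (F k))\<^sup>2)"
        have sq: "(cmod (ch k))\<^sup>2 = (4 * pi\<^sup>2 / L\<^sup>2)\<^sup>2 * Y"
          unfolding chabs Y_def power_mult_distrib power2_abs by (simp add: mult_ac)
        have "L^3 / (16 * pi^4) * ((4 * pi\<^sup>2 / L\<^sup>2)\<^sup>2 * Y) = Y / L"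
          using L pi_gt_zero by (simp add: field_simps eval_nat_numeral)
        moreover have "(real_of_int k)\<^sup>2 * ((real_of_int k - n)\<^sup>2 * (cmod (F k))\<^sup>2 / L) = Y / L"
          unfolding Y_def by simp
        ultimately show ?thesis unfolding sq by simp
      qed
      finally show ?thesis .
    qed
    then have "sum t K \<le> (\<Sum>k\<in>K. L^3 / (16 * pi^4) * (cmod (ch k))\<^sup>2)" by (rule sum_mono)
    also have "\<dots> = L^3 / (16 * pi^4) * (\<Sum>k\<in>K. (cmod (ch k))\<^sup>2)" by (simp add: sum_distrib_left)
    also have "\<dots> \<le> L^3 / (16 * pi^4) * (L * integral {0..L} (\<lambda>s. (cmod (h s))\<^sup>2))"
      by (rule mult_left_mono) (use bessel[OF L hc K(1)] L in \<open>simp_all add: ch_def\<close>)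
    also have "\<dots> = B" unfolding B_def hnorm using L by (simp add: field_simps eval_nat_numeral)
    finally show ?thesis .
  qed
  have B0: "0 \<le> B" using fin[of "{}"] by simp
  have inf: "infsum t (UNIV - {0}) \<le> B"
  proof (cases "t summable_on (UNIV - {0})")
    case True then show ?thesis using fin by (rule infsum_le_finite_sums)
  next
    case False then show ?thesis using B0 by (simp add: infsum_not_exists)
  qed
  have "4 * pi\<^sup>2 * I_tilde_minus1 f L = 16 * pi^4 / L^3 * infsum t (UNIV - {0})"
  proof -
    have tt: "(\<lambda>k. (real_of_int k - rotation_number f L)\<^sup>2 * (cmod (fourier_coeff f L k))\<^sup>2) = t"
      by (rule ext) (simp add: t_def)
    show ?thesis unfolding I_tilde_minus1_def tt using L by (simp add: field_simps eval_nat_numeral)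
  qed
  also have "\<dots> \<le> 16 * pi^4 / L^3 * B"
    by (rule mult_left_mono[OF inf]) (use L in simp)
  also have "\<dots> = I0 f L" unfolding B_def I0_def using L pi_gt_zero by (simp add: field_simps eval_nat_numeral)
  finally show ?thesis .
qed



end
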